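(* Let $(S,\Delta,\mathbb{P})$ be a probability space, $(U,d)$ a separable metric space, $\mathfrak{X}$ the set of $U$-valued random variables on $S$, $\mathcal{I}$ an ideal on $\mathbb{N}$, and $\underline{X}=\{X_n\}$, $\underline{Y}=\{Y_n\}$ sequences in $\mathfrak{X}$ that are $\mathcal{I}$-almost surely equal, i.e. $\{n\in\mathbb{N}:\mathbb{P}(X_n=Y_n)=1\}\in\mathcal{F}(\mathcal{I})$. Then for every $r\geq 0$: $\Lambda^{r}_{\underline{X}}(\mathcal{I}^{\mathbb{P}})=\Lambda^{r}_{\underline{Y}}(\mathcal{I}^{\mathbb{P}})$, $\Gamma^{r^s}_{\underline{X}}(\mathcal{I}^{\mathbb{P}})=\Gamma^{r^s}_{\underline{Y}}(\mathcal{I}^{\mathbb{P}})$, and $\Gamma^{r^w}_{\underline{X}}(\mathcal{I}^{\mathbb{P}})=\Gamma^{r^w}_{\underline{Y}}(\mathcal{I}^{\mathbb{P}})$.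
   Context: An ideal on $\mathbb{N}$ is a family $\mathcal{I}\subseteq\mathcal{P}(\mathbb{N})$ with $\varnothing\in\mathcal{I}$, closed under finite unions and under subsets; $\mathcal{F}(\mathcal{I})=\{A\subseteq\mathbb{N}:\mathbb{N}\setminus A\in\mathcal{I}\}$. For a sequence $\underline{X}=\{X_n\}$ in $\mathfrak{X}$ and $r\geq0$: $\Lambda^{r}_{\underline{X}}(\mathcal{I}^{\mathbb{P}})$ is the set of $Y\in\mathfrak{X}$ for which there is $A\subseteq\mathbb{N}$, $A\notin\mathcal{I}$, with $\lim_{n\in A}\mathbb{P}(d(X_n,Y)\geq r+\varepsilon)=0$ for every $\varepsilon>0$ (limit along $A$ in increasing order); $\Gamma^{r^s}_{\underline{X}}(\mathcal{I}^{\mathbb{P}})$ is the set of $Y\in\mathfrak{X}$ with $\{n:\mathbb{P}(d(X_n,Y)<r+\varepsilon)>1-\delta\}\notin\mathcal{I}$ for all $\varepsilon,\delta>0$; $\Gamma^{r^w}_{\underline{X}}(\mathcal{I}^{\mathbb{P}})$ is the set of $Y\in\mathfrak{X}$ for which there is $\delta_*=\delta_*(Y)>0$ with $\{n:\mathbb{P}(d(X_n,Y)<r+\varepsilon)>\delta_*\}\notin\mathcal{I}$ for every $\varepsilon>0$. *)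

theory Defs
  imports "HOL-Probability.Probability"
begin

definition is_ideal :: "nat set set \<Rightarrow> bool" where
  "is_ideal I \<longleftrightarrow> {} \<in> I \<and> (\<forall>A\<in>I. \<forall>B\<in>I. A \<union> B \<in> I) \<and> (\<forall>A\<in>I. \<forall>B. B \<subseteq> A \<longrightarrow> B \<in> I)"

definition filter_of_ideal :: "nat set set \<Rightarrow> nat set set" where
  "filter_of_ideal I = {A. - A \<in> I}"

definition rvars :: "'s measure \<Rightarrow> ('s \<Rightarrow> 'a::metric_space) set" where
  "rvars M = borel_measurable M"

text \<open>Rough I-limit points in probability: limit along A in increasing order,
rendered as the limit along the filter sequentially restricted to A.\<close>
definition Lambda_set ::
  "'s measure \<Rightarrow> nat set set \<Rightarrow> real \<Rightarrow> (nat \<Rightarrow> 's \<Rightarrow> 'a::metric_space) \<Rightarrow> ('s \<Rightarrow> 'a) set" where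
  "Lambda_set M I r X = {Y \<in> rvars M. \<exists>A. A \<notin> I \<and>
     (\<forall>\<epsilon>>0. ((\<lambda>n. measure M {s \<in> space M. dist (X n s) (Y s) \<ge> r + \<epsilon>}) \<longlongrightarrow> 0)
              (sequentially \<sqinter> principal A))}"

definition Gamma_s_set ::
  "'s measure \<Rightarrow> nat set set \<Rightarrow> real \<Rightarrow> (nat \<Rightarrow> 's \<Rightarrow> 'a::metric_space) \<Rightarrow> ('s \<Rightarrow> 'a) set" where
  "Gamma_s_set M I r X = {Y \<in> rvars M. \<forall>\<epsilon>>0. \<forall>\<delta>>0.
     {n. measure M {s \<in> space M. dist (X n s) (Y s) < r + \<epsilon>} > 1 - \<delta>} \<notin> I}"

definition Gamma_w_set ::
  "'s measure \<Rightarrow> nat set set \<Rightarrow> real \<Rightarrow> (nat \<Rightarrow> 's \<Rightarrow> 'a::metric_space) \<Rightarrow> ('s \<Rightarrow> 'a) set" where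
  "Gamma_w_set M I r X = {Y \<in> rvars M. \<exists>\<delta>>0. \<forall>\<epsilon>>0.
     {n. measure M {s \<in> space M. dist (X n s) (Y s) < r + \<epsilon>} > \<delta>} \<notin> I}"

end

theory Submission
  imports Defs
begin

lemma meas_eq_on_full:
  assumes P: "prob_space M" and S1: "measure M S = 1"
    and A: "A \<in> sets M" and B: "B \<in> sets M" and AB: "A \<inter> S = B \<inter> S"
  shows "measure M A = measure M B"
proof -
  interpret prob_space M by fact
  have S: "S \<in> sets M" using S1 measure_notin_sets by fastforce
  have c0: "measure M (space M - S) = 0" using S S1 prob_compl by simp
  have "\<And>C. C \<in> sets M \<Longrightarrow> measure M C = measure M (C \<inter> S)"
  proof -
    fix C assume C: "C \<in> sets M"
    have "measure M (C - S) \<le> measure M (space M - S)"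
      using C S sets.sets_into_space by (intro finite_measure_mono) auto
    hence z: "measure M (C - S) = 0" using c0 measure_nonneg[of M "C - S"] by linarith
    have "measure M (C - S) = measure M C - measure M (C \<inter> S)"
      using C S by (rule finite_measure_Diff')
    thus "measure M C = measure M (C \<inter> S)" using z by simp
  qed
  thus ?thesis using A B AB by metis
qed

lemma key_eq:
  fixes X Y :: "nat \<Rightarrow> 's \<Rightarrow> 'a::{metric_space, second_countable_topology}"
  assumes P: "prob_space M"
    and X: "X n \<in> borel_measurable M" and Y: "Y n \<in> borel_measurable M"
    and Z: "Z \<in> borel_measurable M"
    and n: "measure M {s \<in> space M. X n s = Y n s} = 1"
  shows "measure M {s \<in> space M. dist (X n s) (Z s) \<ge> c} = measure M {s \<in> space M. dist (Y n s) (Z s) \<ge> c}"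
    and "measure M {s \<in> space M. dist (X n s) (Z s) < c} = measure M {s \<in> space M. dist (Y n s) (Z s) < c}"
proof -
  have m: "{s \<in> space M. dist (X n s) (Z s) \<ge> c} \<in> sets M" "{s \<in> space M. dist (Y n s) (Z s) \<ge> c} \<in> sets M"
     "{s \<in> space M. dist (X n s) (Z s) < c} \<in> sets M" "{s \<in> space M. dist (Y n s) (Z s) < c} \<in> sets M"
    using X Y Z by measurable
  show "measure M {s \<in> space M. dist (X n s) (Z s) \<ge> c} = measure M {s \<in> space M. dist (Y n s) (Z s) \<ge> c}"
    by (rule meas_eq_on_full[OF P n m(1,2)]) auto
  show "measure M {s \<in> space M. dist (X n s) (Z s) < c} = measure M {s \<in> space M. dist (Y n s) (Z s) < c}"
    by (rule meas_eq_on_full[OF P n m(3,4)]) auto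
qed

lemma incl:
  fixes X Y :: "nat \<Rightarrow> 's \<Rightarrow> 'a::{metric_space, second_countable_topology}"
  assumes P: "prob_space M"
    and I: "is_ideal I"
    and X: "\<And>n. X n \<in> rvars M"
    and Y: "\<And>n. Y n \<in> rvars M"
    and G: "{n. measure M {s \<in> space M. X n s = Y n s} = 1} \<in> filter_of_ideal I"
  shows "Lambda_set M I r X \<subseteq> Lambda_set M I r Y
       \<and> Gamma_s_set M I r X \<subseteq> Gamma_s_set M I r Y
       \<and> Gamma_w_set M I r X \<subseteq> Gamma_w_set M I r Y"
proof -
  define G where "G = {n. measure M {s \<in> space M. X n s = Y n s} = 1}"
  have nG: "- G \<in> I" using G unfolding G_def filter_of_ideal_def by simp
  have un: "A \<in> I \<Longrightarrow> B \<in> I \<Longrightarrow> A \<union> B \<in> I" for A B using I unfolding is_ideal_def by blast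
  have sub: "A \<in> I \<Longrightarrow> B \<subseteq> A \<Longrightarrow> B \<in> I" for A B using I unfolding is_ideal_def by blast
  have cut: "B \<in> I" if "A \<in> I" "B \<subseteq> A \<union> - G" for A B
    using sub[OF un[OF that(1) nG] that(2)] .
  have eq1: "measure M {s \<in> space M. dist (X n s) (Z s) \<ge> c} = measure M {s \<in> space M. dist (Y n s) (Z s) \<ge> c}"
    and eq2: "measure M {s \<in> space M. dist (X n s) (Z s) < c} = measure M {s \<in> space M. dist (Y n s) (Z s) < c}"
    if "n \<in> G" "Z \<in> rvars M" for n Z c
    using key_eq[OF P, of X n Y Z] X[of n] Y[of n] that unfolding rvars_def G_def by auto
  have L: "Lambda_set M I r X \<subseteq> Lambda_set M I r Y"
  proof
    fix Z assume "Z \<in> Lambda_set M I r X"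
    then obtain A where Z: "Z \<in> rvars M" and A: "A \<notin> I" and lim: "\<forall>\<epsilon>>0. ((\<lambda>n. measure M {s \<in> space M. dist (X n s) (Z s) \<ge> r + \<epsilon>}) \<longlongrightarrow> 0)
              (sequentially \<sqinter> principal A)" unfolding Lambda_set_def by blast
    have A': "A \<inter> G \<notin> I"
    proof
      assume "A \<inter> G \<in> I" then have "A \<in> I" by (rule cut) auto
      with A show False by simp
    qed
    have "((\<lambda>n. measure M {s \<in> space M. dist (Y n s) (Z s) \<ge> r + \<epsilon>}) \<longlongrightarrow> 0)
              (sequentially \<sqinter> principal (A \<inter> G))" if e: "\<epsilon> > 0" for \<epsilon>
    proof -
      have "((\<lambda>n. measure M {s \<in> space M. dist (X n s) (Z s) \<ge> r + \<epsilon>}) \<longlongrightarrow> 0)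
              (sequentially \<sqinter> principal (A \<inter> G))"
        by (rule tendsto_mono[OF _ lim[rule_format, OF e]]) (rule inf_mono, simp_all)
      moreover have "\<forall>\<^sub>F n in sequentially \<sqinter> principal (A \<inter> G).
         measure M {s \<in> space M. dist (X n s) (Z s) \<ge> r + \<epsilon>} = measure M {s \<in> space M. dist (Y n s) (Z s) \<ge> r + \<epsilon>}"
        using eq1[OF _ Z] by (auto simp: eventually_inf_principal)
      ultimately show ?thesis by (rule Lim_transform_eventually)
    qed
    with A' Z show "Z \<in> Lambda_set M I r Y" unfolding Lambda_set_def by blast
  qed
  have S: "Gamma_s_set M I r X \<subseteq> Gamma_s_set M I r Y"
  proof
    fix Z assume "Z \<in> Gamma_s_set M I r X"
    then have Z: "Z \<in> rvars M" and h: "\<forall>\<epsilon>>0. \<forall>\<delta>>0.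
     {n. measure M {s \<in> space M. dist (X n s) (Z s) < r + \<epsilon>} > 1 - \<delta>} \<notin> I"
      unfolding Gamma_s_set_def by auto
    have "\<forall>\<epsilon>>0. \<forall>\<delta>>0. {n. measure M {s \<in> space M. dist (Y n s) (Z s) < r + \<epsilon>} > 1 - \<delta>} \<notin> I"
    proof (intro allI impI notI)
      fix \<epsilon> \<delta> :: real assume e: "\<epsilon> > 0" and d: "\<delta> > 0"
        and c: "{n. measure M {s \<in> space M. dist (Y n s) (Z s) < r + \<epsilon>} > 1 - \<delta>} \<in> I"
      have "{n. measure M {s \<in> space M. dist (X n s) (Z s) < r + \<epsilon>} > 1 - \<delta>} \<in> I"
        by (rule cut[OF c]) (use eq2[OF _ Z] in auto)
      with h e d show False by blast
    qed
    with Z show "Z \<in> Gamma_s_set M I r Y" unfolding Gamma_s_set_def by blast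
  qed
  have W: "Gamma_w_set M I r X \<subseteq> Gamma_w_set M I r Y"
  proof
    fix Z assume "Z \<in> Gamma_w_set M I r X"
    then obtain \<delta> where Z: "Z \<in> rvars M" and d: "\<delta> > 0" and h: "\<forall>\<epsilon>>0.
     {n. measure M {s \<in> space M. dist (X n s) (Z s) < r + \<epsilon>} > \<delta>} \<notin> I"
      unfolding Gamma_w_set_def by auto
    have "\<forall>\<epsilon>>0. {n. measure M {s \<in> space M. dist (Y n s) (Z s) < r + \<epsilon>} > \<delta>} \<notin> I"
    proof (intro allI impI notI)
      fix \<epsilon> :: real assume e: "\<epsilon> > 0"
        and c: "{n. measure M {s \<in> space M. dist (Y n s) (Z s) < r + \<epsilon>} > \<delta>} \<in> I"
      have "{n. measure M {s \<in> space M. dist (X n s) (Z s) < r + \<epsilon>} > \<delta>} \<in> I"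
        by (rule cut[OF c]) (use eq2[OF _ Z] in auto)
      with h e show False by auto
    qed
    with Z d show "Z \<in> Gamma_w_set M I r Y" unfolding Gamma_w_set_def by blast
  qed
  show ?thesis using L S W by (intro conjI)
qed

theorem proposition3p7:
  fixes M :: "'s measure" and I :: "nat set set"
    and X Y :: "nat \<Rightarrow> 's \<Rightarrow> 'a::{metric_space, second_countable_topology}"
    and r :: real
  assumes "prob_space M"
    and "is_ideal I"
    and "\<And>n. X n \<in> rvars M"
    and "\<And>n. Y n \<in> rvars M"
    and "{n. measure M {s \<in> space M. X n s = Y n s} = 1} \<in> filter_of_ideal I"
    and "r \<ge> 0"
  shows "Lambda_set M I r X = Lambda_set M I r Y
       \<and> Gamma_s_set M I r X = Gamma_s_set M I r Y
       \<and> Gamma_w_set M I r X = Gamma_w_set M I r Y"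
proof -
  have "{n. measure M {s \<in> space M. Y n s = X n s} = 1} = {n. measure M {s \<in> space M. X n s = Y n s} = 1}"
  proof -
    have "\<And>n. {s \<in> space M. Y n s = X n s} = {s \<in> space M. X n s = Y n s}" by auto
    then show ?thesis by simp
  qed
  with assms(5) have G': "{n. measure M {s \<in> space M. Y n s = X n s} = 1} \<in> filter_of_ideal I" by simp
  have a: "Lambda_set M I r X \<subseteq> Lambda_set M I r Y
       \<and> Gamma_s_set M I r X \<subseteq> Gamma_s_set M I r Y
       \<and> Gamma_w_set M I r X \<subseteq> Gamma_w_set M I r Y" by (rule incl[OF assms(1-5)])
  have b: "Lambda_set M I r Y \<subseteq> Lambda_set M I r X
       \<and> Gamma_s_set M I r Y \<subseteq> Gamma_s_set M I r X
       \<and> Gamma_w_set M I r Y \<subseteq> Gamma_w_set M I r X" by (rule incl[OF assms(1,2,4,3) G'])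
  from a b show ?thesis by (intro conjI equalityI) (elim conjE; assumption)+
qed

end
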